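(* Let $F$ be an $F_\sigma$ subset of $[0,1]$ with $0\in F$. Then there exist non-empty, convex and closed sets $A_1,A_2,A_3\subset\mathbb R^3$ such that: (i) if $\alpha\in F$ and $\beta\in[0,1]$ then $P_{A_3}^\alpha P_{A_2}^\alpha P_{A_1}^\beta$ has a fixed point; (ii) if $\alpha\in[0,1]\setminus F$ and $\beta\in(0,1]$ then $P_{A_3}^\alpha P_{A_2}^\alpha P_{A_1}^\beta$ has no fixed point.
   Context: For a non-empty, convex, closed subset $A\subset\mathbb R^3$, $P_A$ denotes the Euclidean nearest-point projection onto $A$, and for $\alpha\in[0,1]$, $P_A^\alpha(x)=\alpha P_A(x)+(1-\alpha)x$ (the $\alpha$-relaxed projection). Compositions are written as products. *)

theory Defs
  imports "HOL-Analysis.Analysis"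
begin

definition relproj :: "real \<Rightarrow> (real^3) set \<Rightarrow> real^3 \<Rightarrow> real^3" where
  "relproj \<alpha> A x = \<alpha> *\<^sub>R closest_point A x + (1 - \<alpha>) *\<^sub>R x"

end

theory Submission
  imports Defs
begin


lemma inner3: "inner (x::real^3) y = x$1*y$1 + x$2*y$2 + x$3*y$3"
  by (simp add: inner_vec_def sum_3)

definition A1g :: "(nat \<Rightarrow> (real\<times>real) set) \<Rightarrow> (real^3) set" where
  "A1g L = {x. \<forall>a b r. (\<forall>n. \<forall>y\<in>L n. a * fst y + b * snd y + r \<le> real n) \<longrightarrow>
        a * x$1 + b * x$2 + r \<le> x$3}"

lemma A1g_INT: "A1g L = (\<Inter>(a,b,r)\<in>{(a,b,r). \<forall>n. \<forall>y\<in>L n. a * fst y + b * snd y + r \<le> real n}.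
    {x::real^3. inner (vector[a,b,-1]) x \<le> -r})"
  by (auto simp: A1g_def inner3 algebra_simps)

lemma A1g_closed: "closed (A1g L)"
  unfolding A1g_INT by (intro closed_INT ballI) (auto intro: closed_halfspace_le)

lemma A1g_convex: "convex (A1g L)"
  unfolding A1g_INT by (intro convex_INT ballI) (auto intro: convex_halfspace_le)

lemma A1g_mem: "y \<in> L n \<Longrightarrow> vector[fst y, snd y, real n] \<in> A1g L"
  unfolding A1g_def by auto

lemma A1g_disk:
  assumes L: "\<And>n y. y \<in> L n \<Longrightarrow> (fst y)^2 + (snd y)^2 \<le> 1"
    and x: "x \<in> A1g L"
  shows "(x$1)^2 + (x$2)^2 \<le> 1"
proof (rule ccontr)
  assume h: "\<not> (x$1)^2 + (x$2)^2 \<le> 1"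
  define s where "s = (x$1)^2 + (x$2)^2"
  have s1: "s > 1" using h s_def by simp
  define A where "A = (\<bar>x$3\<bar> + 1) / (s - 1)"
  have A0: "A > 0" using s1 by (simp add: A_def)
  have "A * (2 * x$1) * x$1 + A * (2 * x$2) * x$2 + (- A * (s + 1)) \<le> x$3"
  proof -
    have "\<forall>n. \<forall>y\<in>L n. A * (2 * x$1) * fst y + A * (2 * x$2) * snd y + (- A * (s + 1)) \<le> real n"
    proof (intro allI ballI)
      fix n y assume y: "y \<in> L n"
      have "2 * (x$1 * fst y + x$2 * snd y) \<le> s + ((fst y)^2 + (snd y)^2)"
        unfolding s_def using sum_squares_ge_zero[of "x$1 - fst y" "x$2 - snd y"]
        by (simp add: power2_eq_square algebra_simps)
      also have "\<dots> \<le> s + 1" using L[OF y] by simp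
      finally have "A * (2 * (x$1 * fst y + x$2 * snd y)) \<le> A * (s + 1)"
        using A0 by (simp add: mult_left_mono)
      hence "A * (2 * x$1) * fst y + A * (2 * x$2) * snd y + (- A * (s + 1)) \<le> 0"
        by (simp add: algebra_simps)
      thus "A * (2 * x$1) * fst y + A * (2 * x$2) * snd y + (- A * (s + 1)) \<le> real n"
        by (meson of_nat_0_le_iff order_trans)
    qed
    thus ?thesis using x unfolding A1g_def by blast
  qed
  moreover have "A * (2 * x$1) * x$1 + A * (2 * x$2) * x$2 + (- A * (s + 1)) = A * (s - 1)"
    by (simp add: s_def power2_eq_square algebra_simps)
  moreover have "A * (s - 1) = \<bar>x$3\<bar> + 1" using s1 by (simp add: A_def)
  ultimately show False by linarith
qed


lemma A1g_circle:
  assumes L: "\<And>n y. y \<in> L n \<Longrightarrow> (fst y)^2 + (snd y)^2 \<le> 1"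
    and Lc: "\<And>n. closed (L n)"
    and x: "x \<in> A1g L" and s: "(x$1)^2 + (x$2)^2 = 1"
  shows "\<exists>n. (x$1, x$2) \<in> L n"
proof (rule ccontr)
  assume h: "\<not> (\<exists>n. (x$1,x$2) \<in> L n)"
  define w where "w = (x$1, x$2)"
  define \<delta> where "\<delta> n = (if L n = {} then 1 else (infdist w (L n))^2 / 2)" for n
  have \<delta>pos: "\<delta> n > 0" for n
  proof (cases "L n = {}")
    case True thus ?thesis by (simp add: \<delta>_def)
  next
    case False
    have "w \<notin> L n" using h w_def by blast
    hence "infdist w (L n) > 0" using infdist_pos_not_in_closed[OF Lc False] by blast
    thus ?thesis using False by (simp add: \<delta>_def)
  qed
  have \<delta>bound: "x$1 * fst y + x$2 * snd y \<le> 1 - \<delta> n" if y: "y \<in> L n" for n y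
  proof -
    have ne: "L n \<noteq> {}" using y by blast
    have i1: "infdist w (L n) \<le> dist w y" using infdist_le[OF y] .
    have i0: "0 \<le> infdist w (L n)" by (rule infdist_nonneg)
    have "(infdist w (L n))^2 \<le> (dist w y)^2" using i1 i0 by (simp add: power_mono)
    moreover have "(dist w y)^2 = (x$1 - fst y)^2 + (x$2 - snd y)^2"
      unfolding w_def by (cases y) (simp add: dist_Pair_Pair dist_real_def)
    moreover have "(x$1 - fst y)^2 + (x$2 - snd y)^2 = 1 - 2 * (x$1 * fst y + x$2 * snd y) + ((fst y)^2 + (snd y)^2)"
      using s by (simp add: power2_eq_square algebra_simps)
    moreover have "(fst y)^2 + (snd y)^2 \<le> 1" using L[OF y] .
    ultimately have "(infdist w (L n))^2 \<le> 2 - 2 * (x$1 * fst y + x$2 * snd y)" by linarith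
    hence "(infdist w (L n))^2 / 2 \<le> 1 - (x$1 * fst y + x$2 * snd y)" by simp
    thus ?thesis using ne by (simp add: \<delta>_def)
  qed
  define c where "c = x$3 + 1"
  define N where "N = nat \<lceil>c\<rceil>"
  define A where "A = (\<Sum>n\<le>N. (\<bar>c\<bar> + 1) / \<delta> n)"
  have terms: "0 \<le> (\<bar>c\<bar> + 1) / \<delta> n" for n using \<delta>pos[of n] by simp
  have Age: "(\<bar>c\<bar>+1)/\<delta> n \<le> A" if "n \<le> N" for n
    unfolding A_def using that terms by (intro member_le_sum) auto
  have A0: "A \<ge> 0" unfolding A_def using terms by (intro sum_nonneg) auto
  have "A * x$1 * x$1 + A * x$2 * x$2 + (c - A) \<le> x$3"
  proof -
    have "\<forall>n. \<forall>y\<in>L n. A * x$1 * fst y + A * x$2 * snd y + (c - A) \<le> real n"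
    proof (intro allI ballI)
      fix n y assume y: "y \<in> L n"
      have e: "A * x$1 * fst y + A * x$2 * snd y + (c - A) = A * ((x$1 * fst y + x$2 * snd y) - 1) + c"
        by (simp add: algebra_simps)
      have b: "x$1 * fst y + x$2 * snd y \<le> 1 - \<delta> n" using \<delta>bound[OF y] .
      show "A * x$1 * fst y + A * x$2 * snd y + (c - A) \<le> real n"
      proof (cases "n \<le> N")
        case True
        have "\<bar>c\<bar> + 1 \<le> A * \<delta> n" using Age[OF True] \<delta>pos[of n] by (simp add: divide_le_eq)
        moreover have "A * ((x$1 * fst y + x$2 * snd y) - 1) \<le> A * (- \<delta> n)"
          using b A0 by (intro mult_left_mono) auto
        ultimately have "A * ((x$1 * fst y + x$2 * snd y) - 1) + c \<le> 0" by linarith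
        thus ?thesis unfolding e by (meson of_nat_0_le_iff order_trans)
      next
        case False
        have "A * ((x$1 * fst y + x$2 * snd y) - 1) \<le> 0"
          using b \<delta>pos[of n] A0 by (intro mult_nonneg_nonpos) auto
        moreover have "c \<le> real n"
        proof -
          have "c \<le> real N" unfolding N_def by linarith
          also have "\<dots> \<le> real n" using False by simp
          finally show ?thesis .
        qed
        ultimately show ?thesis unfolding e by linarith
      qed
    qed
    thus ?thesis using x unfolding A1g_def by blast
  qed
  moreover have "A * x$1 * x$1 + A * x$2 * x$2 + (c - A) = A * ((x$1)^2 + (x$2)^2 - 1) + c"
    by (simp add: power2_eq_square algebra_simps)
  ultimately show False using s c_def by simp
qed




definition hs :: "real \<Rightarrow> real" where "hs a = 2 * (1 - a) / (2 - a)"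
definition Qn :: "real \<Rightarrow> real" where "Qn a = sqrt ((hs a)^2 + 4)"
definition phi :: "real \<Rightarrow> real \<times> real" where "phi a = (hs a / Qn a, 2 / Qn a)"

lemma Qn_sq: "(Qn a)^2 = (hs a)^2 + 4"
  unfolding Qn_def by (simp add: add_nonneg_pos)

lemma Qn_ge2: "Qn a \<ge> 2"
proof -
  have "sqrt 4 \<le> Qn a" unfolding Qn_def by (intro real_sqrt_le_mono) simp
  thus ?thesis by simp
qed

lemma phi_circle: "(fst (phi a))^2 + (snd (phi a))^2 = 1"
proof -
  have q: "Qn a \<noteq> 0" using Qn_ge2[of a] by linarith
  have "(fst (phi a))^2 + (snd (phi a))^2 = ((hs a)^2 + 4) / (Qn a)^2"
    by (simp add: phi_def power_divide add_divide_distrib)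
  also have "\<dots> = 1"
  proof -
    have "(hs a)^2 + 4 \<noteq> 0" using zero_le_power2[of "hs a"] by linarith
    thus ?thesis by (simp add: Qn_sq)
  qed
  finally show ?thesis .
qed

lemma phi_inj: "inj_on phi {0..1}"
proof (rule inj_onI)
  fix a b :: real assume a: "a \<in> {0..1}" and b: "b \<in> {0..1}" and e: "phi a = phi b"
  have qa: "Qn a \<noteq> 0" using Qn_ge2[of a] by linarith
  have qb: "Qn b \<noteq> 0" using Qn_ge2[of b] by linarith
  have e2: "2 / Qn a = 2 / Qn b" using arg_cong[OF e, of snd] by (simp add: phi_def)
  hence qq: "Qn a = Qn b" using qa qb by (simp add: field_simps)
  have h: "hs a / Qn a = hs b / Qn b" using arg_cong[OF e, of fst] by (simp add: phi_def)
  have "hs a = hs a / Qn a * Qn a" using qa by simp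
  also have "\<dots> = hs b / Qn b * Qn b" by (metis h qq)
  also have "\<dots> = hs b" using qb by simp
  finally have "hs a = hs b" .
  hence "2 * (1 - a) / (2 - a) = 2 * (1 - b) / (2 - b)" by (simp add: hs_def)
  moreover have "2 - a \<noteq> 0" "2 - b \<noteq> 0" using a b by auto
  ultimately have "2 * (1 - a) * (2 - b) = 2 * (1 - b) * (2 - a)" by (simp add: field_simps)
  thus "a = b" by (simp add: algebra_simps)
qed

lemma phi_cont: "continuous_on {0..1} phi"
proof -
  have "continuous_on {0..1} hs" unfolding hs_def
    by (intro continuous_intros) auto
  hence c: "continuous_on {0..1} Qn" unfolding Qn_def by (intro continuous_intros)
  have nz: "\<forall>x\<in>{0..1}. Qn x \<noteq> 0" using Qn_ge2 by (metis linorder_not_le zero_less_numeral order_less_le_trans not_less_iff_gr_or_eq)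
  show ?thesis unfolding phi_def
    using \<open>continuous_on {0..1} hs\<close> c nz by (intro continuous_intros) auto
qed

definition Lset :: "(nat \<Rightarrow> real set) \<Rightarrow> nat \<Rightarrow> (real \<times> real) set" where
  "Lset C n = cball 0 (1 - 1 / (real n + 2)) \<union> phi ` C n"

lemma norm_pair_sq: "(norm (y::real\<times>real))^2 = (fst y)^2 + (snd y)^2"
  by (cases y) (simp add: norm_Pair)

lemma Lset_disk:
  assumes "y \<in> Lset C n" shows "(fst y)^2 + (snd y)^2 \<le> 1"
proof -
  have "y \<in> cball 0 (1 - 1 / (real n + 2)) \<or> y \<in> phi ` C n" using assms by (simp add: Lset_def)
  thus ?thesis
  proof
    assume "y \<in> cball 0 (1 - 1 / (real n + 2))"
    hence "norm y \<le> 1 - 1 / (real n + 2)" by simp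
    moreover have "0 \<le> 1 / (real n + 2)" by simp
    ultimately have "norm y \<le> 1" by linarith
    hence "(norm y)^2 \<le> 1" by (simp add: power_le_one)
    thus ?thesis by (simp add: norm_pair_sq)
  next
    assume "y \<in> phi ` C n" thus ?thesis using phi_circle by auto
  qed
qed


lemma Lset_closed:
  assumes "closed (C n)" "C n \<subseteq> {0..1}"
  shows "closed (Lset C n)"
proof -
  have "compact (C n)" using assms compact_Icc[of 0 1] by (metis compact_Int_closed inf.absorb_iff2)
  hence "compact (phi ` C n)"
    using continuous_on_subset[OF phi_cont assms(2)] by (rule compact_continuous_image[rotated])
  hence "closed (phi ` C n)" by (rule compact_imp_closed)
  thus ?thesis unfolding Lset_def by (intro closed_Un) auto
qed

lemma Lset_inner:
  assumes "(fst w)^2 + (snd w)^2 < (1::real)"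
  shows "\<exists>n. w \<in> Lset C n"
proof -
  have nw: "(norm w)^2 < 1" using assms by (simp add: norm_pair_sq)
  hence nw1: "norm w < 1" by (simp add: power_less_one_iff abs_less_iff)
  obtain n where n: "1 / (1 - norm w) < real n" using reals_Archimedean2 by blast
  have pos: "1 - norm w > 0" using nw1 by simp
  have "1 < real n * (1 - norm w)" using n pos by (simp add: divide_less_eq mult.commute)
  also have "\<dots> \<le> (real n + 2) * (1 - norm w)" using pos by (intro mult_right_mono) auto
  finally have "1 / (real n + 2) < 1 - norm w" by (simp add: divide_less_eq mult.commute)
  hence "norm w \<le> 1 - 1 / (real n + 2)" by simp
  hence "w \<in> Lset C n" by (simp add: Lset_def)
  thus ?thesis by blast
qed

lemma Lset_phi: "a \<in> C n \<Longrightarrow> phi a \<in> Lset C n"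
  by (simp add: Lset_def)

lemma Lset_circle:
  assumes "y \<in> Lset C n" "(fst y)^2 + (snd y)^2 = 1"
  shows "y \<in> phi ` C n"
proof (rule ccontr)
  assume "y \<notin> phi ` C n"
  hence "norm y \<le> 1 - 1 / (real n + 2)" using assms(1) by (simp add: Lset_def)
  moreover have "0 < 1 / (real n + 2)" by simp
  ultimately have "norm y < 1" by linarith
  hence "(norm y)^2 < 1" by (simp add: power_less_one_iff abs_less_iff)
  thus False using assms(2) by (simp add: norm_pair_sq)
qed




lemma lim_lemma:
  fixes K M :: real
  assumes "\<And>s. 0 \<le> s \<Longrightarrow> s < 1 \<Longrightarrow> s * K \<le> M"
  shows "K \<le> M"
proof (rule ccontr)
  assume h: "\<not> K \<le> M"
  have M0: "0 \<le> M" using assms[of 0] by simp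
  hence K0: "K > 0" using h by linarith
  define s where "s = (M / K + 1) / 2"
  have "M / K < 1" using h K0 by (simp add: divide_less_eq)
  hence s1: "s < 1" unfolding s_def by simp
  have s0: "0 \<le> s" unfolding s_def using M0 K0 by simp
  have "s * K = (M + K) / 2" unfolding s_def using K0 by (simp add: field_simps)
  hence "s * K > M" using h by simp
  thus False using assms[OF s0 s1] by simp
qed

lemma final_alg:
  fixes Q z1 z2 p1 p2 :: real
  assumes Q: "Q > 1" and z: "z1^2 + z2^2 = 1" and p: "p1^2 + p2^2 \<le> 1"
    and h: "(Q*z1 - p1)*z1 + (Q*z2 - p2)*z2 \<le> (Q*z1 - p1)*p1 + (Q*z2-p2)*p2"
  shows "p1 = z1 \<and> p2 = z2"
proof -
  define t where "t = z1*p1 + z2*p2"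
  define P where "P = p1^2 + p2^2"
  have "(Q*z1 - p1)*z1 + (Q*z2 - p2)*z2 = Q*(z1^2+z2^2) - t"
    by (simp add: t_def power2_eq_square algebra_simps)
  hence l: "(Q*z1 - p1)*z1 + (Q*z2 - p2)*z2 = Q - t" using z by simp
  have r: "(Q*z1 - p1)*p1 + (Q*z2-p2)*p2 = Q * t - P"
    by (simp add: t_def P_def power2_eq_square algebra_simps)
  have cs: "t^2 \<le> P"
  proof -
    have "t^2 + (z1*p2 - z2*p1)^2 = (z1^2 + z2^2) * (p1^2 + p2^2)"
      by (simp add: t_def power2_eq_square algebra_simps)
    hence "t^2 + (z1*p2 - z2*p1)^2 = P" using z by (simp add: P_def)
    thus ?thesis using zero_le_power2[of "z1*p2 - z2*p1"] by linarith
  qed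
  have t1: "t \<le> 1"
  proof (rule ccontr)
    assume "\<not> t \<le> 1"
    hence "1 < t" by simp
    hence "1 * 1 < t * t" by (intro mult_strict_mono) auto
    thus False using cs p unfolding P_def by (simp add: power2_eq_square)
  qed
  have "Q * (1 - t) \<le> t - P" using h l r by (simp add: algebra_simps)
  also have "\<dots> \<le> t - t^2" using cs by simp
  finally have "Q * (1 - t) \<le> t * (1 - t)" by (simp add: power2_eq_square algebra_simps)
  hence "(Q - t) * (1 - t) \<le> 0" by (simp add: algebra_simps)
  moreover have "Q - t > 0" using Q t1 by simp
  ultimately have "1 - t \<le> 0" by (simp add: mult_le_0_iff)
  hence tt: "t = 1" using t1 by simp
  have "(p1 - z1)^2 + (p2 - z2)^2 = P - 2 * t + 1"
    using z by (simp add: t_def P_def power2_eq_square algebra_simps)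
  also have "\<dots> \<le> 0" using tt p P_def by simp
  finally have "(p1 - z1)^2 + (p2 - z2)^2 \<le> 0" .
  hence "(p1 - z1)^2 = 0 \<and> (p2 - z2)^2 = 0"
    using zero_le_power2[of "p1 - z1"] zero_le_power2[of "p2 - z2"] by linarith
  thus ?thesis by simp
qed

lemma alg_fix1:
  fixes a b z x :: real
  assumes a: "0 < a" "a \<le> 1" and b: "0 \<le> b" "b \<le> 1"
  defines "\<mu> \<equiv> (1-a)^2"
  defines "D \<equiv> 1 - \<mu> * (1 - b)"
  shows "(1-a)*(a*2 + (1-a)*(b*z + (1-b)*x)) = x \<longleftrightarrow> D * (x - z) = (1 - \<mu>) * (2*(1-a)/(2-a) - z)"
proof -
  have a2: "2 - a \<noteq> 0" using a by simp
  have h: "(1 - \<mu>) * (2*(1-a)/(2-a)) = 2*a*(1-a)"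
    using a2 unfolding \<mu>_def by (simp add: field_simps power2_eq_square)
  have "(1-a)*(a*2 + (1-a)*(b*z + (1-b)*x)) = 2*a*(1-a) + \<mu>*b*z + \<mu>*(1-b)*x"
    unfolding \<mu>_def by (simp add: power2_eq_square algebra_simps)
  moreover have "(1 - \<mu>) * (2*(1-a)/(2-a) - z) = 2*a*(1-a) - (1-\<mu>)*z"
    using h by (simp add: algebra_simps)
  ultimately show ?thesis unfolding D_def by (auto simp: algebra_simps)
qed

lemma alg_fix2:
  fixes a b z x :: real
  assumes a: "0 < a" "a \<le> 1" and b: "0 \<le> b" "b \<le> 1"
  defines "\<mu> \<equiv> (1-a)^2"
  defines "D \<equiv> 1 - \<mu> * (1 - b)"
  shows "a*2 + (1-a)*(a*2 + (1-a)*(b*z + (1-b)*x)) = x \<longleftrightarrow> D * (x - z) = (1 - \<mu>) * (2 - z)"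
proof -
  have "a*2 + (1-a)*(a*2 + (1-a)*(b*z + (1-b)*x)) = 2 - 2*\<mu> + \<mu>*b*z + \<mu>*(1-b)*x"
    unfolding \<mu>_def by (simp add: power2_eq_square algebra_simps)
  thus ?thesis unfolding D_def by (auto simp: algebra_simps)
qed




lemma cp_char:
  fixes S :: "(real^3) set"
  assumes "convex S" "closed S" "p \<in> S" "\<forall>y\<in>S. inner (x - p) (y - p) \<le> 0"
  shows "closest_point S x = p"
proof -
  have "dist x p \<le> dist x z" if "z \<in> S" for z
  proof -
    have e: "(x - p) - (z - p) = x - z" by simp
    have i: "inner (x-p) (z-p) = ((norm (x-p))^2 + (norm (z-p))^2 - (norm (x - z))^2) / 2"
      using dot_norm_neg[of "x-p" "z-p"] unfolding e .
    have "inner (x-p) (z-p) \<le> 0" using assms(4) that by auto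
    hence "(norm (x-p))^2 + (norm (z-p))^2 - (norm (x - z))^2 \<le> 0" using i by simp
    hence "(norm (x-p))^2 \<le> (norm (x-z))^2" using zero_le_power2[of "norm (z-p)"] by linarith
    hence "(dist x p)^2 \<le> (dist x z)^2" by (simp add: dist_norm)
    thus ?thesis by (rule power2_le_imp_le) simp
  qed
  thus ?thesis using closest_point_unique[OF assms(1,2,3)] by blast
qed

definition A2 :: "(real^3) set" where "A2 = {x. x$1 = 2 \<and> x$2 = 2}"
definition A3 :: "(real^3) set" where "A3 = {x. x$1 = 0 \<and> x$2 = 2}"

lemma hyp_cc: "closed {x::real^3. x$i = c} \<and> convex {x::real^3. x$i = c}"
  using closed_hyperplane[of "axis i (1::real) :: real^3" c] convex_hyperplane[of "axis i (1::real) :: real^3" c] by (simp add: inner_axis')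
lemma A2_eq: "A2 = {x. x$1 = 2} \<inter> {x. x$2 = 2}"
  by (auto simp: A2_def)
lemma A3_eq: "A3 = {x. x$1 = 0} \<inter> {x. x$2 = 2}"
  by (auto simp: A3_def)

lemma A2_props: "closed A2" "convex A2" "A2 \<noteq> {}"
  subgoal unfolding A2_eq using hyp_cc by (intro closed_Int) auto
  subgoal unfolding A2_eq using hyp_cc by (intro convex_Int) auto
  subgoal proof -
    have "vector[2,2,0] \<in> A2" by (simp add: A2_def)
    thus ?thesis by blast
  qed
  done
lemma A3_props: "closed A3" "convex A3" "A3 \<noteq> {}"
  subgoal unfolding A3_eq using hyp_cc by (intro closed_Int) auto
  subgoal unfolding A3_eq using hyp_cc by (intro convex_Int) auto
  subgoal proof -
    have "vector[0,2,0] \<in> A3" by (simp add: A3_def)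
    thus ?thesis by blast
  qed
  done

lemma cp_A2: "closest_point A2 v = vector [2,2,v$3]"
proof (rule cp_char[OF A2_props(2,1)])
  show "vector[2,2,v$3] \<in> A2" by (simp add: A2_def)
  show "\<forall>y\<in>A2. inner (v - vector[2,2,v$3]) (y - vector[2,2,v$3]) \<le> 0"
    by (simp add: A2_def inner3)
qed
lemma cp_A3: "closest_point A3 v = vector [0,2,v$3]"
proof (rule cp_char[OF A3_props(2,1)])
  show "vector[0,2,v$3] \<in> A3" by (simp add: A3_def)
  show "\<forall>y\<in>A3. inner (v - vector[0,2,v$3]) (y - vector[0,2,v$3]) \<le> 0"
    by (simp add: A3_def inner3)
qed

lemma relproj_comp: "relproj a A x $ i = a * closest_point A x $ i + (1 - a) * x $ i"
  by (simp add: relproj_def)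


lemma T_comp:
  "relproj a A3 (relproj a A2 u) $ 1 = (1-a)*(a*2 + (1-a)*u$1)"
  "relproj a A3 (relproj a A2 u) $ 2 = a*2 + (1-a)*(a*2 + (1-a)*u$2)"
  "relproj a A3 (relproj a A2 u) $ 3 = u$3"
  by (simp_all add: relproj_def cp_A2 cp_A3 algebra_simps)

theorem lemma4:
  fixes F :: "real set"
  assumes "fsigma_in euclideanreal F" and "F \<subseteq> {0..1}" and "0 \<in> F"
  shows "\<exists>A1 A2 A3 :: (real^3) set.
     A1 \<noteq> {} \<and> convex A1 \<and> closed A1 \<and>
     A2 \<noteq> {} \<and> convex A2 \<and> closed A2 \<and>
     A3 \<noteq> {} \<and> convex A3 \<and> closed A3 \<and>
     (\<forall>\<alpha> \<in> F. \<forall>\<beta> \<in> {0..1}. \<exists>x.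
        relproj \<alpha> A3 (relproj \<alpha> A2 (relproj \<beta> A1 x)) = x) \<and>
     (\<forall>\<alpha> \<in> {0..1} - F. \<forall>\<beta> \<in> {0<..1}. \<forall>x.
        relproj \<alpha> A3 (relproj \<alpha> A2 (relproj \<beta> A1 x)) \<noteq> x)"
proof -
  from iffD1[OF fsigma_in_ascending assms(1)]
  obtain C :: "nat \<Rightarrow> real set" where Cc: "\<forall>n. closedin euclideanreal (C n)" and Cu: "\<Union>(range C) = F"
    by (elim exE conjE) blast
  have Ccl: "closed (C n)" for n using Cc closed_closedin by blast
  have Csub: "C n \<subseteq> {0..1}" for n
  proof -
    have "C n \<subseteq> \<Union>(range C)" by (rule Union_upper) simp
    thus ?thesis using Cu assms(2) by simp
  qed
  define L where "L = Lset C"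
  define A1 where "A1 = A1g L"
  have Ldisk: "\<And>n y. y \<in> L n \<Longrightarrow> (fst y)^2 + (snd y)^2 \<le> 1"
    unfolding L_def by (rule Lset_disk)
  have Lcl: "\<And>n. closed (L n)" unfolding L_def by (rule Lset_closed[OF Ccl Csub])
  have A1cl: "closed A1" unfolding A1_def by (rule A1g_closed)
  have A1cv: "convex A1" unfolding A1_def by (rule A1g_convex)
  have A1disk: "\<And>y. y \<in> A1 \<Longrightarrow> (y$1)^2 + (y$2)^2 \<le> 1"
    unfolding A1_def by (rule A1g_disk[OF Ldisk])
  have A1mem: "\<And>y n. y \<in> L n \<Longrightarrow> vector[fst y, snd y, real n] \<in> A1"
    unfolding A1_def by (rule A1g_mem)
  have "(0::real\<times>real) \<in> L 0" unfolding L_def Lset_def by simp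
  hence o: "vector[0, 0, 0] \<in> A1" using A1mem[of 0 0] by simp
  hence A1ne: "A1 \<noteq> {}" by blast
  have part1: "\<forall>\<alpha> \<in> F. \<forall>\<beta> \<in> {0..1}. \<exists>x. relproj \<alpha> A3 (relproj \<alpha> A2 (relproj \<beta> A1 x)) = x"
  proof (intro ballI)
    fix \<alpha> \<beta> :: real assume aF: "\<alpha> \<in> F" and b: "\<beta> \<in> {0..1}"
    show "\<exists>x. relproj \<alpha> A3 (relproj \<alpha> A2 (relproj \<beta> A1 x)) = x"
    proof (cases "\<alpha> = 0")
      case True
      have "relproj \<beta> A1 (vector[0,0,0]) = vector[0,0,0]"
        using closest_point_self[OF o] by (simp add: relproj_def algebra_simps)
      hence "relproj \<alpha> A3 (relproj \<alpha> A2 (relproj \<beta> A1 (vector[0,0,0]))) = vector[0,0,0]"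
        using True by (simp add: relproj_def)
      thus ?thesis by blast
    next
      case False
      have a0: "0 < \<alpha>" "\<alpha> \<le> 1" using False aF assms(2) by force+
      have b0: "0 \<le> \<beta>" "\<beta> \<le> 1" using b by auto
      obtain n where an: "\<alpha> \<in> C n" using aF Cu by blast
      define z1 where "z1 = fst (phi \<alpha>)"
      define z2 where "z2 = snd (phi \<alpha>)"
      define Q where "Q = Qn \<alpha>"
      have Q2: "Q \<ge> 2" unfolding Q_def by (rule Qn_ge2)
      have zc: "z1^2 + z2^2 = 1" unfolding z1_def z2_def by (rule phi_circle)
      have hz1: "hs \<alpha> = Q * z1" using Q2 unfolding z1_def Q_def phi_def by simp
      have hz2: "2 = Q * z2" using Q2 unfolding z2_def Q_def phi_def by simp
      have zL: "(z1, z2) \<in> L n" using Lset_phi[of \<alpha> C n, OF an] unfolding L_def z1_def z2_def by simp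
      define p :: "real^3" where "p = vector[z1, z2, real n]"
      have pA: "p \<in> A1" using A1mem[OF zL] unfolding p_def by simp
      define \<mu> where "\<mu> = (1-\<alpha>)^2"
      define D where "D = 1 - \<mu> * (1 - \<beta>)"
      define \<kappa> where "\<kappa> = (1 - \<mu>) / D"
      have \<mu>1: "\<mu> < 1" "0 \<le> \<mu>" unfolding \<mu>_def using a0
        by (auto simp: power_less_one_iff abs_less_iff)
      have "\<mu> * (1 - \<beta>) \<le> \<mu>" using \<mu>1 b0 by (simp add: mult_left_le)
      hence D0: "D > 0" unfolding D_def using \<mu>1 by linarith
      have k0: "\<kappa> \<ge> 0" unfolding \<kappa>_def using D0 \<mu>1 by simp
      have Dk: "D * \<kappa> = 1 - \<mu>" unfolding \<kappa>_def using D0 by simp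
      define x :: "real^3" where "x = vector[z1 + \<kappa> * (hs \<alpha> - z1), z2 + \<kappa> * (2 - z2), real n]"
      have cpx: "closest_point A1 x = p"
      proof (rule cp_char[OF A1cv A1cl pA], intro ballI)
        fix y assume yA: "y \<in> A1"
        have "2 * (z1 * y$1 + z2 * y$2) \<le> (z1^2 + z2^2) + ((y$1)^2 + (y$2)^2)"
          using sum_squares_ge_zero[of "z1 - y$1" "z2 - y$2"]
          by (simp add: power2_eq_square algebra_simps)
        moreover have "(y$1)^2 + (y$2)^2 \<le> 1" using A1disk[OF yA] .
        ultimately have "2 * (z1 * y$1 + z2 * y$2) \<le> 2" unfolding zc by linarith
        hence zy: "z1 * y$1 + z2 * y$2 \<le> 1" by simp
        have "inner (x - p) (y - p) = \<kappa> * (hs \<alpha> - z1) * (y$1 - z1) + \<kappa> * (2 - z2) * (y$2 - z2)"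
          by (simp add: inner3 x_def p_def)
        also have "\<dots> = \<kappa> * (Q*z1 - z1) * (y$1 - z1) + \<kappa> * (Q*z2 - z2) * (y$2 - z2)"
          unfolding hz1 hz2[symmetric] ..
        also have "\<dots> = \<kappa> * (Q - 1) * (z1 * y$1 + z2 * y$2 - (z1^2 + z2^2))"
          by (simp add: power2_eq_square algebra_simps)
        also have "\<dots> \<le> 0" using zc zy k0 Q2
          by (intro mult_nonneg_nonpos) auto
        finally show "inner (x - p) (y - p) \<le> 0" .
      qed
      have u: "relproj \<beta> A1 x $ i = \<beta> * p $ i + (1 - \<beta>) * x $ i" for i
        by (simp add: relproj_comp cpx)
      have c1: "relproj \<alpha> A3 (relproj \<alpha> A2 (relproj \<beta> A1 x)) $ 1 = x $ 1"
      proof -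
        have "D * (x$1 - z1) = (1 - \<mu>) * (2*(1-\<alpha>)/(2-\<alpha>) - z1)"
          using Dk unfolding x_def hs_def by simp
        hence "(1-\<alpha>)*(\<alpha>*2 + (1-\<alpha>)*(\<beta>*z1 + (1-\<beta>)*x$1)) = x$1"
          using alg_fix1[OF a0 b0, of z1 "x$1"] unfolding \<mu>_def D_def by blast
        thus ?thesis by (simp add: T_comp u p_def)
      qed
      have c2: "relproj \<alpha> A3 (relproj \<alpha> A2 (relproj \<beta> A1 x)) $ 2 = x $ 2"
      proof -
        have "D * (x$2 - z2) = (1 - \<mu>) * (2 - z2)"
          using Dk unfolding x_def by simp
        hence "\<alpha>*2 + (1-\<alpha>)*(\<alpha>*2 + (1-\<alpha>)*(\<beta>*z2 + (1-\<beta>)*x$2)) = x$2"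
          using alg_fix2[OF a0 b0, of z2 "x$2"] unfolding \<mu>_def D_def by blast
        thus ?thesis by (simp add: T_comp u p_def)
      qed
      have c3: "relproj \<alpha> A3 (relproj \<alpha> A2 (relproj \<beta> A1 x)) $ 3 = x $ 3"
      proof -
        have "relproj \<beta> A1 x $ 3 = real n" unfolding u by (simp add: p_def x_def algebra_simps)
        moreover have "x $ 3 = real n" by (simp add: x_def)
        ultimately show ?thesis by (simp add: T_comp)
      qed
      have "relproj \<alpha> A3 (relproj \<alpha> A2 (relproj \<beta> A1 x)) = x"
        unfolding vec_eq_iff forall_3 using c1 c2 c3 by blast
      thus ?thesis by blast
    qed
  qed
  have part2: "\<forall>\<alpha> \<in> {0..1} - F. \<forall>\<beta> \<in> {0<..1}. \<forall>x. relproj \<alpha> A3 (relproj \<alpha> A2 (relproj \<beta> A1 x)) \<noteq> x"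
  proof (intro ballI allI notI)
    fix \<alpha> \<beta> :: real and x :: "real^3" assume aF: "\<alpha> \<in> {0..1} - F" and b: "\<beta> \<in> {0<..1}"
      and fx: "relproj \<alpha> A3 (relproj \<alpha> A2 (relproj \<beta> A1 x)) = x"
    have a0: "0 < \<alpha>" "\<alpha> \<le> 1" using aF assms(3) by (auto simp: order_le_less)
    have b0: "0 \<le> \<beta>" "\<beta> \<le> 1" "\<beta> \<noteq> 0" using b by auto
    define p where "p = closest_point A1 x"
    have pA: "p \<in> A1" unfolding p_def using closest_point_in_set[OF A1cl A1ne] .
    have VI: "inner (x - p) (y - p) \<le> 0" if "y \<in> A1" for y
      unfolding p_def by (rule closest_point_dot[OF A1cv A1cl that])
    have u: "relproj \<beta> A1 x $ i = \<beta> * p $ i + (1 - \<beta>) * x $ i" for i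
      by (simp add: relproj_comp p_def)
    define \<mu> where "\<mu> = (1-\<alpha>)^2"
    define D where "D = 1 - \<mu> * (1 - \<beta>)"
    have \<mu>1: "\<mu> < 1" "0 \<le> \<mu>" unfolding \<mu>_def using a0
      by (auto simp: power_less_one_iff abs_less_iff)
    have "\<mu> * (1 - \<beta>) \<le> \<mu>" using \<mu>1 b0 by (simp add: mult_left_le)
    hence D0: "D > 0" unfolding D_def using \<mu>1 by linarith
    have e1: "D * (x$1 - p$1) = (1 - \<mu>) * (hs \<alpha> - p$1)"
    proof -
      have "(1-\<alpha>)*(\<alpha>*2 + (1-\<alpha>)*(\<beta>*p$1 + (1-\<beta>)*x$1)) = x$1"
        using arg_cong[OF fx, of "\<lambda>v. v $ 1"] by (simp add: T_comp u)
      thus ?thesis using alg_fix1[OF a0 b0(1,2), of "p$1" "x$1"] unfolding \<mu>_def D_def hs_def by blast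
    qed
    have e2: "D * (x$2 - p$2) = (1 - \<mu>) * (2 - p$2)"
    proof -
      have "\<alpha>*2 + (1-\<alpha>)*(\<alpha>*2 + (1-\<alpha>)*(\<beta>*p$2 + (1-\<beta>)*x$2)) = x$2"
        using arg_cong[OF fx, of "\<lambda>v. v $ 2"] by (simp add: T_comp u)
      thus ?thesis using alg_fix2[OF a0 b0(1,2), of "p$2" "x$2"] unfolding \<mu>_def D_def by blast
    qed
    have e3: "p$3 = x$3"
    proof -
      have "\<beta> * p$3 + (1-\<beta>) * x$3 = x$3"
        using arg_cong[OF fx, of "\<lambda>v. v $ 3"] by (simp add: T_comp u)
      hence "\<beta> * (p$3 - x$3) = 0" by (simp add: algebra_simps)
      thus ?thesis using b0 by simp
    qed
    define a where "a = hs \<alpha> - p$1"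
    define c where "c = 2 - p$2"
    have ineq: "a * (w1 - p$1) + c * (w2 - p$2) \<le> 0" if w: "w1^2 + w2^2 < 1" for w1 w2
    proof -
      obtain n where n: "(w1, w2) \<in> L n" using Lset_inner[of "(w1,w2)" C] w unfolding L_def by auto
      have "vector[w1, w2, real n] \<in> A1" using A1mem[OF n] by simp
      hence "inner (x - p) (vector[w1, w2, real n] - p) \<le> 0" by (rule VI)
      hence "(x$1 - p$1) * (w1 - p$1) + (x$2 - p$2) * (w2 - p$2) \<le> 0"
        using e3 by (simp add: inner3)
      hence "D * ((x$1 - p$1) * (w1 - p$1) + (x$2 - p$2) * (w2 - p$2)) \<le> 0"
        using D0 by (simp add: mult_nonneg_nonpos)
      moreover have "D * ((x$1 - p$1) * (w1 - p$1) + (x$2 - p$2) * (w2 - p$2)) =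
          (D * (x$1 - p$1)) * (w1 - p$1) + (D * (x$2 - p$2)) * (w2 - p$2)"
        by (simp add: algebra_simps)
      moreover have "(D * (x$1 - p$1)) * (w1 - p$1) + (D * (x$2 - p$2)) * (w2 - p$2) =
          (1 - \<mu>) * (a * (w1 - p$1) + c * (w2 - p$2))"
        unfolding e1 e2 a_def c_def by (simp add: algebra_simps)
      ultimately have "(1 - \<mu>) * (a * (w1 - p$1) + c * (w2 - p$2)) \<le> 0" by simp
      thus ?thesis using \<mu>1 by (simp add: mult_le_0_iff)
    qed
    define z1 where "z1 = fst (phi \<alpha>)"
    define z2 where "z2 = snd (phi \<alpha>)"
    define Q where "Q = Qn \<alpha>"
    have Q2: "Q \<ge> 2" unfolding Q_def by (rule Qn_ge2)
    have zc: "z1^2 + z2^2 = 1" unfolding z1_def z2_def by (rule phi_circle)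
    have hz1: "hs \<alpha> = Q * z1" using Q2 unfolding z1_def Q_def phi_def by simp
    have hz2: "2 = Q * z2" using Q2 unfolding z2_def Q_def phi_def by simp
    have "a * z1 + c * z2 \<le> a * p$1 + c * p$2"
    proof (rule lim_lemma)
      fix s :: real assume s: "0 \<le> s" "s < 1"
      have "(s*z1)^2 + (s*z2)^2 = s^2 * (z1^2 + z2^2)" by (simp add: power_mult_distrib algebra_simps)
      also have "\<dots> = s^2" using zc by simp
      also have "s^2 < 1" using s by (simp add: power_less_one_iff)
      finally have "a * (s*z1 - p$1) + c * (s*z2 - p$2) \<le> 0" by (rule ineq)
      thus "s * (a * z1 + c * z2) \<le> a * p$1 + c * p$2" by (simp add: algebra_simps)
    qed
    hence "(Q*z1 - p$1)*z1 + (Q*z2 - p$2)*z2 \<le> (Q*z1 - p$1)*p$1 + (Q*z2 - p$2)*p$2"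
      unfolding a_def c_def hz1 by (subst (1 2) hz2[symmetric]) simp
    hence pz: "p$1 = z1 \<and> p$2 = z2"
      using final_alg[of Q z1 z2 "p$1" "p$2"] Q2 zc A1disk[OF pA] by linarith
    hence pc: "(p$1)^2 + (p$2)^2 = 1" using zc by simp
    have "\<exists>n. (p$1, p$2) \<in> L n"
    proof (rule A1g_circle[where L=L and x=p])
      show "\<And>n y. y \<in> L n \<Longrightarrow> (fst y)^2 + (snd y)^2 \<le> 1" by (rule Ldisk)
      show "\<And>n. closed (L n)" by (rule Lcl)
      show "p \<in> A1g L" using pA unfolding A1_def .
      show "(p$1)^2 + (p$2)^2 = 1" by (rule pc)
    qed
    then obtain n where "(p$1, p$2) \<in> L n" by blast
    hence "phi \<alpha> \<in> L n" using pz unfolding z1_def z2_def by simp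
    hence "phi \<alpha> \<in> phi ` C n" using Lset_circle[of "phi \<alpha>" C n] phi_circle unfolding L_def by blast
    then obtain a' where a': "a' \<in> C n" "phi \<alpha> = phi a'" by blast
    have a'01: "a' \<in> {0..1}" using a'(1) Csub by blast
    have "\<alpha> \<in> {0..1}" using aF by blast
    hence "\<alpha> = a'" using inj_onD[OF phi_inj a'(2) _ a'01] by blast
    thus False using a' Cu aF by blast
  qed
  show ?thesis
    apply (rule exI[of _ A1], rule exI[of _ A2], rule exI[of _ A3])
    using A1ne A1cv A1cl A2_props A3_props part1 part2 by (intro conjI) assumption+
qed


end
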